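(* Let $\mathcal X$ be a finite set and let $\mathcal C$ be a set of probability measures on $(\mathcal X^\infty,\mathcal F)$. Suppose there is a probability measure $\rho$ on $(\mathcal X^\infty,\mathcal F)$ such that $\rho$ predicts every $\mu\in\mathcal C$ in expected average KL divergence. Then there exist a sequence $\mu_k\in\mathcal C$, $k\in\mathbb N$, and positive weights $w_k$, $k\in\mathbb N$, such that the measure $\nu:=\sum_{k\in\mathbb N} w_k\mu_k$ predicts every $\mu\in\mathcal C$ in expected average KL divergence.
   Context: $\mathcal X^\infty$ is the set of one-way infinite sequences $x_1,x_2,\dots$ with $x_i\in\mathcal X$, and $\mathcal F$ is the sigma-field generated by the cylinder sets $[x_{1..n}]$ (all infinite sequences starting with $x_1,\dots,x_n$), $n\in\mathbb N$. For probability measures $\mu,\rho$ the expected cumulative Kullback–Leibler divergence is $d_n(\mu,\rho):=\mathbf E_\mu\sum_{t=1}^n\sum_{a\in\mathcal X}\mu(x_t=a\mid x_{1..t-1})\log\frac{\mu(x_t=a\mid x_{1..t-1})}{\rho(x_t=a\mid x_{1..t-1})}$, equivalently $d_n(\mu,\rho)=-\sum_{x_{1..n}\in\mathcal X^n}\mu(x_{1..n})\log\frac{\rho(x_{1..n})}{\mu(x_{1..n})}$, where $\mu(x_{1..n})$ denotes the $\mu$-probability of the cylinder $[x_{1..n}]$. We say $\rho$ predicts $\mu$ in expected average KL divergence if $\frac1n d_n(\mu,\rho)\to 0$ as $n\to\infty$. *)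

theory Defs
  imports "HOL-Probability.Probability"
begin

text \<open>The sigma-field is that of the library's stream space over the discrete space on 'a,
  i.e. the sigma-field generated by the cylinder sets.\<close>

definition seq_prob :: "'a stream measure \<Rightarrow> bool" where
  "seq_prob M \<longleftrightarrow> prob_space M \<and> sets M = sets (stream_space (count_space (UNIV :: 'a set)))"

definition cyl :: "'a stream measure \<Rightarrow> 'a list \<Rightarrow> real" where
  "cyl M xs = measure M {\<omega> \<in> space M. stake (length xs) \<omega> = xs}"

definition kl_term :: "real \<Rightarrow> real \<Rightarrow> ereal" where
  "kl_term m r = (if m = 0 then 0 else if r = 0 then \<infinity> else ereal (m * ln (m / r)))"

definition kl_div :: "nat \<Rightarrow> 'a stream measure \<Rightarrow> 'a stream measure \<Rightarrow> ereal" where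
  "kl_div n \<mu> \<rho> = (\<Sum>xs \<in> {xs :: 'a list. length xs = n}. kl_term (cyl \<mu> xs) (cyl \<rho> xs))"

definition predicts :: "'a stream measure \<Rightarrow> 'a stream measure \<Rightarrow> bool" where
  "predicts \<rho> \<mu> \<longleftrightarrow> ((\<lambda>n. kl_div n \<mu> \<rho> / ereal (real n)) \<longlongrightarrow> 0) sequentially"

end

theory Submission
  imports Defs
begin



lemma S_finite: "finite {xs :: ('a::finite) list. length xs = n}"
  using finite_lists_length_eq[of "UNIV :: 'a set" n] by simp

lemma S_card: "card {xs :: ('a::finite) list. length xs = n} = CARD('a) ^ n"
  using card_lists_length_eq[of "UNIV :: 'a set" n] by simp

lemma seq_prob_space: "seq_prob (M :: ('a::finite) stream measure) \<Longrightarrow> space M = UNIV"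
  unfolding seq_prob_def by (auto dest!: sets_eq_imp_space_eq simp: space_stream_space)

lemma cyl_set: assumes "seq_prob (M :: ('a::finite) stream measure)"
  shows "{\<omega>\<in>space M. stake n \<omega> = xs} \<in> sets M"
proof -
  have "stake n \<in> measurable M (count_space UNIV)"
  proof -
    have "sets M = sets (stream_space (count_space UNIV))" using assms by (simp add: seq_prob_def)
    then have eq: "measurable M (count_space UNIV) = measurable (stream_space (count_space UNIV)) (count_space (UNIV :: 'a list set))"
      by (rule measurable_cong_sets[OF _ refl])
    show ?thesis unfolding eq by (rule measurable_stake)
  qed
  hence "stake n -` {xs} \<inter> space M \<in> sets M" by (rule measurable_sets) auto
  thus ?thesis by (simp add: vimage_def Int_def conj_commute)
qed

lemma cyl_nonneg: "cyl M xs \<ge> 0" by (simp add: cyl_def)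

lemma cyl_le1: "seq_prob M \<Longrightarrow> cyl M xs \<le> 1"
  unfolding cyl_def seq_prob_def using prob_space.prob_le_1 by blast

lemma cyl_sum: assumes "seq_prob (M :: ('a::finite) stream measure)"
  shows "(\<Sum>xs\<in>{xs. length xs = n}. cyl M xs) = 1"
proof -
  interpret prob_space M using assms by (simp add: seq_prob_def)
  have "(\<Sum>xs\<in>{xs. length xs = n}. cyl M xs) = measure M (\<Union>xs\<in>{xs. length xs = n}. {\<omega>\<in>space M. stake n \<omega> = xs})"
    unfolding cyl_def
    by (subst finite_measure_finite_Union) (auto simp: S_finite cyl_set[OF assms] disjoint_family_on_def)
  also have "(\<Union>xs\<in>{xs. length xs = n}. {\<omega>\<in>space M. stake n \<omega> = xs}) = space M" by auto
  finally show ?thesis by (simp add: prob_space)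
qed



lemma mixture_exists:
  fixes \<mu>s :: "nat \<Rightarrow> ('a::finite) stream measure"
  assumes sp: "\<forall>k. seq_prob (\<mu>s k)" and wn: "\<forall>k. w k \<ge> 0" and ws: "w sums 1"
  shows "\<exists>\<nu>. seq_prob \<nu> \<and> (\<forall>A\<in>sets \<nu>. emeasure \<nu> A = (\<Sum>k. ennreal (w k) * emeasure (\<mu>s k) A))"
proof -
  define SS where "SS = stream_space (count_space (UNIV :: 'a set))"
  define W where "W = density (count_space UNIV) (\<lambda>k. ennreal (w k))"
  have setsW: "sets W = sets (count_space UNIV)" by (simp add: W_def)
  have spW: "space W = UNIV" using sets_eq_imp_space_eq[OF setsW] by simp
  have "emeasure W (space W) = (\<Sum>k. ennreal (w k))"
    unfolding W_def by (simp add: emeasure_density nn_integral_count_space_nat)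
  also have "\<dots> = ennreal (suminf w)"
    by (rule suminf_ennreal2) (use wn ws in \<open>auto simp: sums_iff\<close>)
  also have "suminf w = 1" using ws by (rule sums_unique[symmetric])
  finally have pW: "prob_space W" by (intro prob_spaceI) simp
  have meas: "\<mu>s \<in> measurable W (subprob_algebra SS)"
  proof -
    have "measurable W (subprob_algebra SS) = measurable (count_space UNIV) (subprob_algebra SS)"
      by (rule measurable_cong_sets[OF setsW refl])
    moreover have "\<mu>s \<in> measurable (count_space UNIV) (subprob_algebra SS)"
      using sp by (auto simp: space_subprob_algebra seq_prob_def SS_def prob_space_imp_subprob_space)
    ultimately show ?thesis by simp
  qed
  define \<nu> where "\<nu> = W \<bind> \<mu>s"
  have "prob_space \<nu>" unfolding \<nu>_def
    by (rule prob_space.prob_space_bind[OF pW _ meas]) (use sp in \<open>simp add: seq_prob_def\<close>)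
  moreover have sn: "sets \<nu> = sets SS" unfolding \<nu>_def
    by (rule sets_bind) (use sp in \<open>auto simp: seq_prob_def SS_def spW\<close>)
  moreover have "\<forall>A\<in>sets \<nu>. emeasure \<nu> A = (\<Sum>k. ennreal (w k) * emeasure (\<mu>s k) A)"
  proof
    fix A assume "A \<in> sets \<nu>"
    hence A: "A \<in> sets SS" using sn by simp
    have "emeasure \<nu> A = (\<integral>\<^sup>+k. emeasure (\<mu>s k) A \<partial>W)"
      unfolding \<nu>_def by (rule emeasure_bind[OF _ meas A]) (simp add: spW)
    also have "\<dots> = (\<integral>\<^sup>+k. ennreal (w k) * emeasure (\<mu>s k) A \<partial>count_space UNIV)"
      unfolding W_def by (simp add: nn_integral_density)
    also have "\<dots> = (\<Sum>k. ennreal (w k) * emeasure (\<mu>s k) A)"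
      by (simp add: nn_integral_count_space_nat)
    finally show "emeasure \<nu> A = (\<Sum>k. ennreal (w k) * emeasure (\<mu>s k) A)" .
  qed
  ultimately show ?thesis by (auto simp: seq_prob_def SS_def)
qed

lemma mixture_lower:
  fixes \<mu>s :: "nat \<Rightarrow> ('a::finite) stream measure"
  assumes sp: "\<forall>k. seq_prob (\<mu>s k)" and wn: "\<forall>k. w k \<ge> 0" and sn: "seq_prob \<nu>"
    and eq: "\<forall>A\<in>sets \<nu>. emeasure \<nu> A = (\<Sum>k. ennreal (w k) * emeasure (\<mu>s k) A)"
  shows "cyl \<nu> xs \<ge> w k * cyl (\<mu>s k) xs"
proof -
  define A where "A = {\<omega>\<in>space \<nu>. stake (length xs) \<omega> = xs}"
  have A: "A \<in> sets \<nu>" unfolding A_def by (rule cyl_set[OF sn])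
  have spk: "space (\<mu>s k) = space \<nu>" using sp sn seq_prob_space by metis
  have Ak: "A \<in> sets (\<mu>s k)" using A sp sn unfolding seq_prob_def by auto
  interpret N: prob_space \<nu> using sn by (simp add: seq_prob_def)
  interpret K: prob_space "\<mu>s k" using sp by (simp add: seq_prob_def)
  have "ennreal (w k) * emeasure (\<mu>s k) A \<le> (\<Sum>k. ennreal (w k) * emeasure (\<mu>s k) A)"
    using sum_le_suminf[of "\<lambda>k. ennreal (w k) * emeasure (\<mu>s k) A" "{k}"] by simp
  also have "\<dots> = emeasure \<nu> A" using eq A by simp
  finally have "ennreal (w k * measure (\<mu>s k) A) \<le> ennreal (measure \<nu> A)"
    using wn by (simp add: N.emeasure_eq_measure K.emeasure_eq_measure ennreal_mult)
  hence "w k * measure (\<mu>s k) A \<le> measure \<nu> A" by simp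
  thus ?thesis unfolding cyl_def A_def spk .
qed


lemma cover:
  fixes T :: "'m \<Rightarrow> 'b set" and q :: "'b \<Rightarrow> real"
  assumes fin: "finite S" and q0: "\<forall>x\<in>S. q x \<ge> 0" and TS: "\<forall>\<mu>\<in>C. T \<mu> \<subseteq> S" and Cne: "C \<noteq> {}"
  shows "\<exists>g. (\<forall>i. g i \<in> C) \<and>
     (\<forall>\<mu>\<in>C. real m * sum q (T \<mu> - (\<Union>i<m. T (g i))) \<le> sum q (\<Union>i<m. T (g i)))"
proof (induction m)
  case 0
  obtain c where "c \<in> C" using Cne by blast
  then show ?case by (intro exI[of _ "\<lambda>_. c"]) auto
next
  case (Suc m)
  then obtain g where gC: "\<forall>i. g i \<in> C"
    and IH: "\<forall>\<mu>\<in>C. real m * sum q (T \<mu> - (\<Union>i<m. T (g i))) \<le> sum q (\<Union>i<m. T (g i))" by blast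
  define U where "U = (\<Union>i<m. T (g i))"
  have US: "U \<subseteq> S" using TS gC by (auto simp: U_def)
  define f where "f = (\<lambda>\<mu>. sum q (T \<mu> - U))"
  have "f ` C \<subseteq> (\<lambda>A. sum q (A - U)) ` Pow S" using TS by (auto simp: f_def)
  moreover have "finite ((\<lambda>A. sum q (A - U)) ` Pow S)" using fin by simp
  ultimately have finF: "finite (f ` C)" by (rule finite_subset)
  have "Max (f ` C) \<in> f ` C" using finF Cne by (intro Max_in) auto
  then obtain \<mu>s where \<mu>sC: "\<mu>s \<in> C" and fm: "f \<mu>s = Max (f ` C)" by (metis imageE)
  have mx: "\<forall>\<mu>\<in>C. f \<mu> \<le> f \<mu>s" unfolding fm using finF by auto
  define g' where "g' = g(m := \<mu>s)"
  have U': "(\<Union>i<Suc m. T (g' i)) = U \<union> T \<mu>s"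
    by (auto simp: g'_def U_def lessThan_Suc)
  have sU': "sum q (U \<union> T \<mu>s) = sum q U + f \<mu>s"
  proof -
    have e: "U \<union> T \<mu>s = U \<union> (T \<mu>s - U)" by blast
    have "finite U" "finite (T \<mu>s - U)" using US TS \<mu>sC fin by (auto intro: finite_subset)
    then have eq: "sum q (U \<union> (T \<mu>s - U)) = sum q U + sum q (T \<mu>s - U)"
      by (intro sum.union_disjoint) auto
    show ?thesis unfolding f_def e by (rule eq)
  qed
  show ?case
  proof (intro exI[of _ g'] conjI ballI)
    show "\<forall>i. g' i \<in> C" using gC \<mu>sC by (simp add: g'_def)
    fix \<mu> assume \<mu>C: "\<mu> \<in> C"
    have a1: "sum q (T \<mu> - (U \<union> T \<mu>s)) \<le> f \<mu>"
      unfolding f_def using TS \<mu>C fin q0 by (intro sum_mono2) (auto intro: finite_subset)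
    have a0: "sum q (T \<mu> - (U \<union> T \<mu>s)) \<ge> 0"
      using TS \<mu>C q0 by (intro sum_nonneg) auto
    have "real m * sum q (T \<mu> - (U \<union> T \<mu>s)) \<le> real m * f \<mu>"
      using a1 by (simp add: mult_left_mono)
    also have "\<dots> \<le> sum q U" using IH \<mu>C by (simp add: f_def U_def)
    finally have "real (Suc m) * sum q (T \<mu> - (U \<union> T \<mu>s)) \<le> sum q U + f \<mu>s"
      using a1 mx \<mu>C by (simp add: algebra_simps) (smt (verit) a1 mx \<mu>C)
    thus "real (Suc m) * sum q (T \<mu> - (\<Union>i<Suc m. T (g' i))) \<le> sum q (\<Union>i<Suc m. T (g' i))"
      by (simp only: U' sU')
  qed
qed



definition kr :: "real \<Rightarrow> real \<Rightarrow> real" where "kr m r = (if m = 0 then 0 else m * ln (m / r))"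

lemma kr_ge: assumes "m \<ge> 0" "r \<ge> 0" "m > 0 \<longrightarrow> r > 0" shows "kr m r \<ge> m - r"
proof (cases "m = 0")
  case True thus ?thesis using assms by (simp add: kr_def)
next
  case False
  hence m: "m > 0" using assms by simp
  hence r: "r > 0" using assms by simp
  have "ln (r/m) \<le> r/m - 1" using m r by (intro ln_le_minus_one) simp
  hence "ln (m/r) \<ge> 1 - r/m" using m r by (simp add: ln_div)
  hence "m * ln (m/r) \<ge> m * (1 - r/m)" using m by (simp add: mult_left_mono)
  thus ?thesis using False m by (simp add: kr_def algebra_simps)
qed

lemma kr_ge': assumes "m \<ge> 0" "r \<ge> 0" "m > 0 \<longrightarrow> r > 0" shows "kr m r \<ge> - r"
  using kr_ge[OF assms] assms(1) by linarith

lemma kr_le: assumes "m > 0" "t > 0" "t \<le> v" shows "kr m v \<le> m * ln (m / t)"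
proof -
  have "ln (m / v) \<le> ln (m / t)" using assms by (simp add: frac_le)
  thus ?thesis using assms by (simp add: kr_def mult_left_mono)
qed

lemma key_bound:
  fixes S U :: "'b set" and p q v :: "'b \<Rightarrow> real"
  assumes fin: "finite S"
    and p0: "\<forall>x\<in>S. p x \<ge> 0" and q0: "\<forall>x\<in>S. q x \<ge> 0" and v0: "\<forall>x\<in>S. v x \<ge> 0"
    and sp: "sum p S = 1" and sq: "sum q S = 1"
    and pq: "\<forall>x\<in>S. p x > 0 \<longrightarrow> q x > 0"
    and a0: "\<alpha> > 0" and a1: "\<alpha> \<le> 1" and cr: "\<forall>x\<in>S. \<alpha> * p x \<le> v x"
    and b0: "\<beta> > 0" and b1: "\<beta> \<le> 1" and US: "U \<subseteq> S" and rf: "\<forall>x\<in>U. \<beta> * q x \<le> v x"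
    and n0: "nn > 0" and cov: "sum q ({x\<in>S. q x \<le> nn * p x} - U) \<le> \<delta>"
    and E: "E > 1"
  shows "(\<Sum>x\<in>S. kr (p x) (v x)) \<le> (\<Sum>x\<in>S. kr (p x) (q x)) + 1 + ln (1/\<beta>)
           + (1/nn + E * \<delta> + ((\<Sum>x\<in>S. kr (p x) (q x)) + 1) / ln E) * ln (1/\<alpha>)"
proof -
  define D where "D = (\<Sum>x\<in>S. kr (p x) (q x))"
  define B where "B = S - U"
  define T where "T = {x\<in>S. q x \<le> nn * p x}"
  define V where "V = {x\<in>S. p x \<le> E * q x}"
  have finU: "finite U" using US fin by (rule finite_subset)
  have finB: "finite B" using fin by (simp add: B_def)
  have SUB: "S = U \<union> B" "U \<inter> B = {}" using US by (auto simp: B_def)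
  have la: "ln (1/\<alpha>) \<ge> 0" using a0 a1 by simp
  have lb: "ln (1/\<beta>) \<ge> 0" using b0 b1 by simp
  have lE: "ln E > 0" using E by simp
  have krq: "\<And>x. x \<in> S \<Longrightarrow> kr (p x) (q x) \<ge> - q x" using p0 q0 pq by (intro kr_ge') auto
  have sumS: "\<And>f. sum f S = sum f U + sum f B" using SUB finU finB by (simp add: sum.union_disjoint)
  have ptU: "\<And>x. x \<in> U \<Longrightarrow> kr (p x) (v x) \<le> kr (p x) (q x) + p x * ln (1/\<beta>)"
  proof -
    fix x assume xU: "x \<in> U"
    hence xS: "x \<in> S" using US by auto
    show "kr (p x) (v x) \<le> kr (p x) (q x) + p x * ln (1/\<beta>)"
    proof (cases "p x = 0")
      case True thus ?thesis by (simp add: kr_def)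
    next
      case False
      hence px: "p x > 0" using p0 xS by force
      hence qx: "q x > 0" using pq xS by auto
      have "kr (p x) (v x) \<le> p x * ln (p x / (\<beta> * q x))"
        using px qx b0 rf xU by (intro kr_le) auto
      also have "\<dots> = p x * ln (p x / q x) + p x * ln (1/\<beta>)"
        using px qx b0 by (simp add: ln_div ln_mult algebra_simps)
      finally show ?thesis using False by (simp add: kr_def)
    qed
  qed
  have ptB: "\<And>x. x \<in> B \<Longrightarrow> kr (p x) (v x) \<le> p x * ln (1/\<alpha>)"
  proof -
    fix x assume xB: "x \<in> B"
    hence xS: "x \<in> S" by (auto simp: B_def)
    show "kr (p x) (v x) \<le> p x * ln (1/\<alpha>)"
    proof (cases "p x = 0")
      case True thus ?thesis by (simp add: kr_def)
    next
      case False
      hence px: "p x > 0" using p0 xS by force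
      have "kr (p x) (v x) \<le> p x * ln (p x / (\<alpha> * p x))"
        using px a0 cr xS by (intro kr_le) auto
      thus ?thesis using px by simp
    qed
  qed
  have s1: "(\<Sum>x\<in>S. kr (p x) (v x)) \<le> (\<Sum>x\<in>U. kr (p x) (q x)) + (\<Sum>x\<in>U. p x) * ln (1/\<beta>) + (\<Sum>x\<in>B. p x) * ln (1/\<alpha>)"
  proof -
    have "(\<Sum>x\<in>U. kr (p x) (v x)) \<le> (\<Sum>x\<in>U. kr (p x) (q x) + p x * ln (1/\<beta>))"
      by (rule sum_mono) (rule ptU)
    moreover have "(\<Sum>x\<in>B. kr (p x) (v x)) \<le> (\<Sum>x\<in>B. p x * ln (1/\<alpha>))"
      by (rule sum_mono) (rule ptB)
    ultimately show ?thesis by (simp add: sumS[of "\<lambda>x. kr (p x) (v x)"] sum.distrib sum_distrib_right)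
  qed
  have s2: "(\<Sum>x\<in>U. kr (p x) (q x)) \<le> D + 1"
  proof -
    have "(\<Sum>x\<in>B. kr (p x) (q x)) \<ge> (\<Sum>x\<in>B. - q x)"
      by (rule sum_mono) (use krq in \<open>auto simp: B_def\<close>)
    moreover have "(\<Sum>x\<in>B. q x) \<le> 1"
      using sq sumS[of q] q0 SUB by (smt (verit) Un_iff sum_nonneg)
    ultimately show ?thesis unfolding D_def using sumS[of "\<lambda>x. kr (p x) (q x)"] by (simp add: sum_negf)
  qed
  have s3: "(\<Sum>x\<in>U. p x) \<le> 1" using sp sumS[of p] p0 SUB by (smt (verit) Un_iff sum_nonneg)
  have pB: "(\<Sum>x\<in>B. p x) \<le> 1/nn + E * \<delta> + (D + 1) / ln E"
  proof -
    have finBT: "finite (B \<inter> T)" "finite (B - T)" using finB by auto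
    have e1: "(\<Sum>x\<in>B. p x) = (\<Sum>x\<in>B \<inter> T. p x) + (\<Sum>x\<in>B - T. p x)"
      using finB by (rule sum.Int_Diff)
    have e2: "(\<Sum>x\<in>B \<inter> T. p x) = (\<Sum>x\<in>B \<inter> T \<inter> V. p x) + (\<Sum>x\<in>B \<inter> T - V. p x)"
      using finBT(1) by (rule sum.Int_Diff)
    have b1: "(\<Sum>x\<in>B - T. p x) \<le> 1/nn"
    proof -
      have "(\<Sum>x\<in>B - T. p x) \<le> (\<Sum>x\<in>B - T. q x / nn)"
        using n0 by (intro sum_mono) (auto simp: T_def B_def field_simps)
      also have "\<dots> = (\<Sum>x\<in>B - T. q x) / nn" by (simp add: sum_divide_distrib)
      also have "(\<Sum>x\<in>B - T. q x) \<le> (\<Sum>x\<in>S. q x)"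
        using fin q0 by (intro sum_mono2) (auto simp: B_def)
      finally show ?thesis using sq n0 by (simp add: divide_right_mono)
    qed
    have b2: "(\<Sum>x\<in>B \<inter> T \<inter> V. p x) \<le> E * \<delta>"
    proof -
      have "(\<Sum>x\<in>B \<inter> T \<inter> V. p x) \<le> (\<Sum>x\<in>B \<inter> T \<inter> V. E * q x)"
        by (intro sum_mono) (auto simp: V_def)
      also have "\<dots> = E * (\<Sum>x\<in>B \<inter> T \<inter> V. q x)" by (simp add: sum_distrib_left)
      also have "(\<Sum>x\<in>B \<inter> T \<inter> V. q x) \<le> (\<Sum>x\<in>T - U. q x)"
        using fin q0 by (intro sum_mono2) (auto simp: B_def T_def)
      also have "\<dots> \<le> \<delta>" using cov by (simp add: T_def)
      finally show ?thesis using E by simp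
    qed
    have b3: "(\<Sum>x\<in>B \<inter> T - V. p x) \<le> (D + 1) / ln E"
    proof -
      have m1: "(\<Sum>x\<in>B \<inter> T - V. p x) \<le> (\<Sum>x\<in>S - V. p x)"
        using fin p0 by (intro sum_mono2) (auto simp: B_def)
      have m2: "(\<Sum>x\<in>S - V. p x) * ln E \<le> (\<Sum>x\<in>S - V. kr (p x) (q x))"
      proof -
        have "(\<Sum>x\<in>S - V. p x) * ln E = (\<Sum>x\<in>S - V. p x * ln E)" by (simp add: sum_distrib_right)
        also have "\<dots> \<le> (\<Sum>x\<in>S - V. kr (p x) (q x))"
        proof (rule sum_mono)
          fix x assume x: "x \<in> S - V"
          hence xS: "x \<in> S" and gt: "p x > E * q x" by (auto simp: V_def)
          have qx: "q x \<ge> 0" using q0 xS by auto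
          hence px: "p x > 0" using gt E by (smt (verit) mult_nonneg_nonneg)
          hence qx': "q x > 0" using pq xS by auto
          have "E < p x / q x" using gt qx' by (simp add: field_simps)
          hence "ln E \<le> ln (p x / q x)" using E by simp
          thus "p x * ln E \<le> kr (p x) (q x)" using px by (simp add: kr_def mult_left_mono)
        qed
        finally show ?thesis .
      qed
      have m3: "(\<Sum>x\<in>S - V. kr (p x) (q x)) \<le> D + 1"
      proof -
        have eq: "D = (\<Sum>x\<in>S \<inter> V. kr (p x) (q x)) + (\<Sum>x\<in>S - V. kr (p x) (q x))"
          unfolding D_def using fin by (rule sum.Int_Diff)
        have "(\<Sum>x\<in>S \<inter> V. kr (p x) (q x)) \<ge> (\<Sum>x\<in>S \<inter> V. - q x)"
          by (rule sum_mono) (use krq in \<open>auto\<close>)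
        moreover have "(\<Sum>x\<in>S \<inter> V. q x) \<le> (\<Sum>x\<in>S. q x)"
          using fin q0 by (intro sum_mono2) auto
        ultimately show ?thesis using eq sq by (simp add: sum_negf)
      qed
      have "(\<Sum>x\<in>S - V. p x) \<le> (D + 1) / ln E"
        using m2 m3 lE by (simp add: pos_le_divide_eq)
      thus ?thesis using m1 by linarith
    qed
    show ?thesis using e1 e2 b1 b2 b3 by linarith
  qed
  have "(\<Sum>x\<in>B. p x) * ln (1/\<alpha>) \<le> (1/nn + E * \<delta> + (D + 1) / ln E) * ln (1/\<alpha>)"
    using pB la by (rule mult_right_mono)
  moreover have "(\<Sum>x\<in>U. p x) * ln (1/\<beta>) \<le> ln (1/\<beta>)"
    using mult_right_mono[OF s3 lb] by simp
  ultimately show ?thesis using s1 s2 unfolding D_def by linarith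
qed



lemma pe_bound: "prod_encode (a, b) + 1 \<le> (a + b + 1)^2"
proof -
  have "triangle (a + b) \<le> (a + b) * Suc (a + b)" by (simp add: triangle_def)
  thus ?thesis by (simp add: prod_encode_def power2_eq_square algebra_simps)
qed

lemma sq_le_4pow: "n \<ge> 1 \<Longrightarrow> (n + 1)^2 \<le> (4::nat)^n"
proof (induction n rule: dec_induct)
  case base then show ?case by (simp add: power2_eq_square)
next
  case (step n)
  have "(Suc n + 1)^2 \<le> (2 * (n+1))^2" by (rule power_mono) auto
  also have "\<dots> = 4 * (n+1)^2" by (simp only: power2_eq_square algebra_simps)
  also have "\<dots> \<le> 4 * 4^n" using step by simp
  finally show ?case by simp
qed

lemma crude_nat_bound: assumes "n \<ge> 1" "N \<ge> 1" shows "(n + 1)^2 + N^n \<le> (8 * N)^n"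
proof -
  have "(n+1)^2 \<le> 4^n" using sq_le_4pow assms by blast
  also have "\<dots> \<le> 4^n * N^n" using assms by simp
  finally have a: "(n+1)^2 \<le> 4^n * N^n" .
  have b: "N^n \<le> 4^n * N^n" by simp
  have "(8 * N)^n = (2 * 4 * N)^n" by simp
  also have "\<dots> = 2^n * (4^n * N^n)" by (simp only: power_mult_distrib mult.assoc)
  also have "2^n * (4^n * N^n) \<ge> 2 * (4^n * N^n)" using assms
    by (intro mult_right_mono) (auto simp: self_le_power)
  finally show ?thesis using a b by linarith
qed

lemma ln_alpha_bound:
  assumes n: "n \<ge> 1" and N: "N \<ge> 1"
  shows "ln (1 / ((3 / pi^2) / (real ((n + 1)^2 + N^n))^4)) \<le> real n * (6 + 4 * ln (8 * real N))"
proof -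
  define M where "M = real ((n + 1)^2 + N^n)"
  have "1 \<le> (n+1)^2 + N^n" using one_le_power[of "n+1" 2] by linarith
  hence M1: "M \<ge> 1" unfolding M_def by (metis of_nat_1 of_nat_le_iff)
  have "real ((n + 1)^2 + N^n) \<le> real ((8 * N)^n)" using crude_nat_bound[OF n N] by (rule of_nat_mono)
  hence Mle: "M \<le> (8 * real N)^n" unfolding M_def by simp
  have e: "ln (1 / ((3 / pi^2) / M^4)) = ln (pi^2 / 3) + 4 * ln M"
  proof -
    have "1 / ((3 / pi^2) / M^4) = (pi^2/3) * M^4" by (simp add: field_simps)
    moreover have "ln ((pi^2/3) * M^4) = ln (pi^2/3) + ln (M^4)"
      using M1 pi_gt_zero by (intro ln_mult_pos) auto
    moreover have "ln (M^4) = 4 * ln M" by (simp add: ln_realpow)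
    ultimately show ?thesis by simp
  qed
  have p6: "ln (pi^2/3) \<le> 6"
  proof -
    have "ln (pi^2/3) \<le> pi^2/3 - 1" by (intro ln_le_minus_one) (simp add: pi_gt_zero)
    also have "pi^2 \<le> 4^2" using pi_less_4 pi_gt_zero by (intro power_mono) auto
    hence "pi^2/3 - 1 \<le> 6" by simp
    finally show ?thesis by simp
  qed
  have lM: "ln M \<le> real n * ln (8 * real N)"
  proof -
    have p: "8 * real N > 0" using N by simp
    have "ln M \<le> ln ((8 * real N)^n)" using Mle M1 by simp
    also have "\<dots> = real n * ln (8 * real N)" by (rule ln_realpow)
    finally show ?thesis .
  qed
  have "ln (1 / ((3 / pi^2) / M^4)) \<le> real n * (6 + 4 * ln (8 * real N))"
  proof -
    have "real n \<ge> 1" using n by simp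
    thus ?thesis unfolding e distrib_left using p6 lM by linarith
  qed
  thus ?thesis unfolding M_def .
qed

lemma K_bounds:
  assumes "x \<ge> 0"
  shows "real (nat \<lceil>exp x\<rceil>) \<ge> exp x" "real (nat \<lceil>exp x\<rceil>) \<le> 2 * exp x"
proof -
  have e1: "exp x \<ge> 1" using assms by simp
  have r: "real (nat \<lceil>exp x\<rceil>) = of_int \<lceil>exp x\<rceil>" using e1 by simp
  show "real (nat \<lceil>exp x\<rceil>) \<ge> exp x" unfolding r by (rule le_of_int_ceiling)
  have "of_int \<lceil>exp x\<rceil> \<le> exp x + 1" by linarith
  thus "real (nat \<lceil>exp x\<rceil>) \<le> 2 * exp x" unfolding r using e1 by linarith
qed

lemma ln_beta_bound:
  assumes n: "n \<ge> 1" and j: "j \<ge> 1" and K: "K = nat \<lceil>exp (real n / real j)\<rceil>"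
  shows "ln (1 / ((6 / pi^2) / (real ((n + j + 1)^2 + K))^4 / real n))
     \<le> (3 + 4 * ln 4 + 9 * ln 2 + 8 * ln (real j + 1)) + 9 * ln (real n) + 4 * (real n / real j)"
proof -
  define x where "x = real n / real j"
  have x0: "x \<ge> 0" by (simp add: x_def)
  define M where "M = real ((n + j + 1)^2 + K)"
  have Kb: "real K \<le> 2 * exp x" using K_bounds(2)[OF x0] by (simp add: K x_def)
  have n1: "real n \<ge> 1" and j1: "real j \<ge> 1" using n j by auto
  have "1 \<le> (n+j+1)^2 + K" using one_le_power[of "n+j+1" 2] by linarith
  hence M1: "M \<ge> 1" unfolding M_def by (metis of_nat_1 of_nat_le_iff)
  define a where "a = ((real n + 1) * (real j + 1))^2"
  have "(real n + 1) * (real j + 1) \<ge> 1" using n1 j1 mult_mono[of 1 "real n + 1" 1 "real j + 1"] by simp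
  hence a1: "a \<ge> 1" unfolding a_def by (rule one_le_power)
  have "real n + real j + 1 \<le> (real n + 1) * (real j + 1)" using n1 j1 by (simp add: algebra_simps)
  hence "(real n + real j + 1)^2 \<le> a" unfolding a_def by (intro power_mono) auto
  moreover have "exp x \<ge> 1" using x0 by simp
  ultimately have "M \<le> a + 2 * exp x" using Kb by (simp add: M_def add.commute add.left_commute)
  also have "\<dots> \<le> 2 * a * (2 * exp x)"
  proof -
    have h: "(a - 1) * (4 * exp x - 1) \<ge> 0" using a1 \<open>exp x \<ge> 1\<close> by (intro mult_nonneg_nonneg) linarith+
    have eq: "2 * a * (2 * exp x) = (a - 1) * (4 * exp x - 1) + a + 4 * exp x - 1" by (simp add: algebra_simps)
    show ?thesis unfolding eq using h \<open>exp x \<ge> 1\<close> by linarith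
  qed
  finally have Mle: "M \<le> 4 * a * exp x" by simp
  have "ln M \<le> ln (4 * a * exp x)" using Mle M1 by simp
  also have "\<dots> = ln 4 + ln a + x" using a1 by (simp add: ln_mult_pos)
  also have "ln a = 2 * ln (real n + 1) + 2 * ln (real j + 1)"
    unfolding a_def using n1 j1 by (simp add: ln_realpow ln_mult_pos)
  finally have lM: "ln M \<le> ln 4 + 2 * ln (real n + 1) + 2 * ln (real j + 1) + x" by simp
  have e: "ln (1 / ((6 / pi^2) / M^4 / real n)) = ln (pi^2/6) + 4 * ln M + ln (real n)"
  proof -
    have "1 / ((6 / pi^2) / M^4 / real n) = (pi^2/6) * M^4 * real n" using n1 by (simp add: field_simps)
    moreover have "ln ((pi^2/6) * M^4 * real n) = ln (pi^2/6) + ln (M^4) + ln (real n)"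
    proof -
      have p1: "(pi^2/6) * M^4 > 0" using M1 pi_gt_zero by simp
      have "ln ((pi^2/6) * M^4 * real n) = ln ((pi^2/6) * M^4) + ln (real n)"
        using p1 n1 by (intro ln_mult_pos) auto
      moreover have "ln ((pi^2/6) * M^4) = ln (pi^2/6) + ln (M^4)"
        using M1 pi_gt_zero by (intro ln_mult_pos) auto
      ultimately show ?thesis by simp
    qed
    moreover have "ln (M^4) = 4 * ln M" by (simp add: ln_realpow)
    ultimately show ?thesis by simp
  qed
  have p3: "ln (pi^2/6) \<le> 3"
  proof -
    have "ln (pi^2/6) \<le> pi^2/6 - 1" by (intro ln_le_minus_one) (simp add: pi_gt_zero)
    also have "pi^2 \<le> 4^2" using pi_less_4 pi_gt_zero by (intro power_mono) auto
    hence "pi^2/6 - 1 \<le> 3" by simp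
    finally show ?thesis by simp
  qed
  have ln2: "ln (real n + 1) \<le> ln 2 + ln (real n)"
  proof -
    have "ln (real n + 1) \<le> ln (2 * real n)" using n1 by simp
    also have "\<dots> = ln 2 + ln (real n)" using n1 by (simp add: ln_mult_pos)
    finally show ?thesis .
  qed
  have lnn: "ln (real n) \<le> ln (real n + 1)" using n1 by simp
  have "ln (1 / ((6 / pi^2) / M^4 / real n))
     \<le> (3 + 4 * ln 4 + 9 * ln 2 + 8 * ln (real j + 1)) + 9 * ln (real n) + 4 * x"
    unfolding e using p3 lM ln2 lnn by linarith
  thus ?thesis by (simp add: M_def x_def)
qed

lemma Edelta_bound:
  assumes n: "n \<ge> 1" and j: "j \<ge> 1" and K: "K = nat \<lceil>exp (real n / real j)\<rceil>"
  shows "exp (real n / (2 * real j)) * (1 / real K) \<le> 2 * real j / real n"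
proof -
  define y where "y = real n / (2 * real j)"
  have y0: "y > 0" using n j by (simp add: y_def)
  have "real n / real j = 2 * y" by (simp add: y_def)
  hence Kb: "real K \<ge> exp (2 * y)" using K_bounds(1)[of "real n / real j"] by (simp add: K)
  have "real K > 0" using Kb by (smt (verit) exp_gt_zero)
  have "exp (2 * y) = exp y * exp y" by (simp add: exp_add[symmetric])
  hence "exp y * (1 / real K) \<le> exp y * (1 / (exp y * exp y))"
    using Kb \<open>real K > 0\<close> by (intro mult_left_mono divide_left_mono) auto
  also have "\<dots> = 1 / exp y" by simp
  also have "\<dots> \<le> 1 / y" using y0 exp_ge_add_one_self[of y] by (intro divide_left_mono) (auto simp del: exp_ge_add_one_self)
  also have "1 / y = 2 * real j / real n" by (simp add: y_def)
  finally show ?thesis by (simp add: y_def)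
qed

lemma combine:
  fixes Dv Dr lb la Ed lE n j A Cb :: real
  assumes main: "Dv \<le> Dr + 1 + lb + (1/n + Ed + (Dr+1)/lE) * la"
    and lb: "lb \<le> Cb + 9 * ln n + 4 * (n / j)"
    and la: "la \<le> n * A" "la \<ge> 0" and A: "A \<ge> 0"
    and Ed: "Ed \<le> 2 * j / n" "Ed \<ge> 0" and lE: "lE = n / (2 * j)"
    and Dr: "Dr \<ge> -1" and n: "n \<ge> 1" and j: "j \<ge> 1"
  shows "Dv \<le> 4 * (n / j) + (1 + 2 * j * A) * Dr + (1 + Cb + A * (1 + 4 * j)) + 9 * ln n"
proof -
  define M where "M = 1/n + Ed + (Dr+1)/lE"
  have M: "M = 1/n + Ed + 2 * j * (Dr + 1) / n" using n j by (simp add: M_def lE field_simps)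
  have M0: "M \<ge> 0" unfolding M using Ed Dr n j by (intro add_nonneg_nonneg divide_nonneg_nonneg) auto
  have Mle: "M \<le> (1 + 2 * j + 2 * j * (Dr + 1)) / n" unfolding M using Ed
    by (simp add: add_divide_distrib)
  have "M * la \<le> M * (n * A)" using M0 la by (simp add: mult_left_mono)
  also have "\<dots> \<le> (1 + 2 * j + 2 * j * (Dr + 1)) / n * (n * A)"
    using Mle A n by (intro mult_right_mono) auto
  also have "\<dots> = (1 + 2 * j + 2 * j * (Dr + 1)) * A" using n by simp
  finally have "M * la \<le> (1 + 2 * j + 2 * j * (Dr + 1)) * A" .
  hence "Dv \<le> Dr + 1 + (Cb + 9 * ln n + 4 * (n / j)) + (1 + 2 * j + 2 * j * (Dr + 1)) * A"
    using main lb unfolding M_def[symmetric] by linarith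
  also have "\<dots> = 4 * (n / j) + (1 + 2 * j * A) * Dr + (1 + Cb + A * (1 + 4 * j)) + 9 * ln n"
    by (simp add: algebra_simps)
  finally show ?thesis .
qed

lemma final_limit:
  fixes Dr Dv c :: "nat \<Rightarrow> real" and A :: real
  assumes Dr: "(\<lambda>n. Dr n / real n) \<longlonglongrightarrow> 0"
    and Dv0: "eventually (\<lambda>n. Dv n \<ge> 0) sequentially"
    and bnd: "\<And>j. j \<ge> 1 \<Longrightarrow> eventually (\<lambda>n. Dv n \<le> 4 * (real n / real j) + (1 + 2 * real j * A) * Dr n + c j + 9 * ln (real n)) sequentially"
  shows "(\<lambda>n. Dv n / real n) \<longlonglongrightarrow> 0"
proof (rule order_tendstoI)
  fix a :: real assume "a < 0"
  show "eventually (\<lambda>n. a < Dv n / real n) sequentially"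
    using Dv0 by eventually_elim (use \<open>a < 0\<close> in \<open>smt (verit) divide_nonneg_nonneg of_nat_0_le_iff\<close>)
next
  fix a :: real assume a: "a > 0"
  define j where "j = nat \<lceil>8 / a\<rceil> + 1"
  have j1: "j \<ge> 1" by (simp add: j_def)
  have "real j > 8 / a" unfolding j_def by linarith
  hence "4 / real j < a / 2" using a j1 by (simp add: field_simps)
  have lnn: "(\<lambda>n. ln (real n) / real n) \<longlonglongrightarrow> 0"
    using filterlim_compose[OF ln_x_over_x_tendsto_0 filterlim_real_sequentially] by simp
  have "(\<lambda>n. (1 + 2 * real j * A) * (Dr n / real n) + c j * (1 / real n) + 9 * (ln (real n) / real n)) \<longlonglongrightarrow>
        (1 + 2 * real j * A) * 0 + c j * 0 + 9 * 0"
    by (intro tendsto_add tendsto_mult tendsto_const Dr lnn lim_inverse_n')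
  hence "eventually (\<lambda>n. (1 + 2 * real j * A) * (Dr n / real n) + c j * (1 / real n) + 9 * (ln (real n) / real n) < a / 2) sequentially"
    using a by (intro order_tendstoD) auto
  moreover have "eventually (\<lambda>n. n \<ge> 1) sequentially" by (rule eventually_ge_at_top)
  ultimately show "eventually (\<lambda>n. Dv n / real n < a) sequentially" using bnd[OF j1]
  proof eventually_elim
    case (elim n)
    have n1: "real n \<ge> 1" using elim(2) by simp
    have "Dv n / real n \<le> (4 * (real n / real j) + (1 + 2 * real j * A) * Dr n + c j + 9 * ln (real n)) / real n"
      using elim(3) n1 by (intro divide_right_mono) auto
    also have "\<dots> = 4 / real j + ((1 + 2 * real j * A) * (Dr n / real n) + c j * (1 / real n) + 9 * (ln (real n) / real n))"
      using n1 by (simp add: field_simps)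
    finally show ?case using elim(1) \<open>4 / real j < a / 2\<close> by linarith
  qed
qed




lemma div_le_self_aux: "0 \<le> (a::real) \<Longrightarrow> 1 \<le> b \<Longrightarrow> a / b \<le> a"
  using divide_left_mono[of 1 b a] by simp

lemma pi_sq_ge9: "pi^2 \<ge> 9"
  using power_mono[of 3 pi 2] pi_gt3 by simp

lemma kl_ereal:
  assumes "finite A" "\<forall>x\<in>A. p x \<ge> 0 \<and> r x \<ge> 0 \<and> (p x > 0 \<longrightarrow> r x > 0)"
  shows "(\<Sum>x\<in>A. kl_term (p x) (r x)) = ereal (\<Sum>x\<in>A. kr (p x) (r x))"
proof -
  have "(\<Sum>x\<in>A. kl_term (p x) (r x)) = (\<Sum>x\<in>A. ereal (kr (p x) (r x)))"
  proof (rule sum.cong[OF refl])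
    fix x assume x: "x \<in> A"
    show "kl_term (p x) (r x) = ereal (kr (p x) (r x))"
      using assms(2) x by (cases "p x = 0") (auto simp: kl_term_def kr_def)
  qed
  thus ?thesis by simp
qed

lemma kl_inf:
  assumes "finite A" "x \<in> A" "p x > 0" "r x = 0"
  shows "(\<Sum>x\<in>A. kl_term (p x) (r x)) = \<infinity>"
  using assms by (subst sum_Pinfty) (auto simp: kl_term_def intro!: bexI[of _ x])

lemma kr_sum_ge:
  assumes "finite A" "\<forall>x\<in>A. p x \<ge> 0 \<and> r x \<ge> 0 \<and> (p x > 0 \<longrightarrow> r x > 0)"
  shows "(\<Sum>x\<in>A. kr (p x) (r x)) \<ge> (\<Sum>x\<in>A. p x) - (\<Sum>x\<in>A. r x)"
proof -
  have "(\<Sum>x\<in>A. kr (p x) (r x)) \<ge> (\<Sum>x\<in>A. p x - r x)"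
    using assms(2) by (intro sum_mono kr_ge) auto
  thus ?thesis by (simp add: sum_subtractf)
qed

theorem theorem2:
  fixes C :: "('a::finite) stream measure set"
  assumes "C \<noteq> {}"
    and "\<forall>\<mu>\<in>C. seq_prob \<mu>"
    and "\<exists>\<rho>. seq_prob \<rho> \<and> (\<forall>\<mu>\<in>C. predicts \<rho> \<mu>)"
  shows "\<exists>(\<mu>s :: nat \<Rightarrow> 'a stream measure) (w :: nat \<Rightarrow> real) \<nu>.
           (\<forall>k. \<mu>s k \<in> C) \<and> (\<forall>k. w k > 0) \<and> w sums 1 \<and>
           seq_prob \<nu> \<and>
           (\<forall>A \<in> sets \<nu>. emeasure \<nu> A = (\<Sum>k. ennreal (w k) * emeasure (\<mu>s k) A)) \<and>
           (\<forall>\<mu>\<in>C. predicts \<nu> \<mu>)"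
proof -
  obtain \<rho> where \<rho>: "seq_prob \<rho>" and pr: "\<forall>\<mu>\<in>C. predicts \<rho> \<mu>" using assms(3) by blast
  obtain \<mu>0 where \<mu>0: "\<mu>0 \<in> C" using assms(1) by blast
  have spC: "\<And>\<mu>. \<mu> \<in> C \<Longrightarrow> seq_prob \<mu>" using assms(2) by blast
  define q where "q = cyl \<rho>"
  define N where "N = CARD('a)"
  have N1: "N \<ge> 1" by (simp add: N_def)
  define S where "S = (\<lambda>n::nat. {xs :: 'a list. length xs = n})"
  have finS: "\<And>n. finite (S n)" by (simp add: S_def S_finite)
  have q0: "\<And>x. q x \<ge> 0" by (simp add: q_def cyl_nonneg)
  have sq: "\<And>n. sum q (S n) = 1" unfolding q_def S_def by (rule cyl_sum[OF \<rho>])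
  define T where "T = (\<lambda>n \<mu>. {x \<in> S n. q x \<le> real n * cyl \<mu> x})"
  define K where "K = (\<lambda>n j. nat \<lceil>exp (real n / real j)\<rceil>)"
  define U where "U = (\<lambda>n (g::nat \<Rightarrow> 'a stream measure) m. \<Union>i<m. T n (g i))"
  define gP where "gP = (\<lambda>n j g. (\<forall>i. g i \<in> C) \<and> (\<forall>\<mu>\<in>C. real (K n j) * sum q (T n \<mu> - U n g (K n j)) \<le> sum q (U n g (K n j))))"
  define g where "g = (\<lambda>n j. SOME g. gP n j g)"
  have g: "gP n j (g n j)" for n j
  proof -
    have "\<exists>g. gP n j g" unfolding gP_def U_def
      using cover[where S="S n" and q=q and T="T n" and C=C and m="K n j"] finS q0 assms(1)
      by (auto simp: T_def)
    thus ?thesis unfolding g_def by (rule someI_ex)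
  qed
  define en where "en = (\<lambda>n. SOME h. bij_betw h {0..<N^n} (S n))"
  have en: "bij_betw (en n) {0..<N^n} (S n)" for n
  proof -
    have "\<exists>h. bij_betw h {0..<card (S n)} (S n)" by (rule ex_bij_betw_nat_finite) (rule finS)
    moreover have "card (S n) = N^n" by (simp add: S_def N_def S_card)
    ultimately have "\<exists>h. bij_betw h {0..<N^n} (S n)" by simp
    thus ?thesis unfolding en_def by (rule someI_ex)
  qed
  define crP where "crP = (\<lambda>x \<mu>'. \<mu>' \<in> C \<and> (\<forall>\<mu>\<in>C. cyl \<mu> x \<le> 2 * cyl \<mu>' x))"
  define cr where "cr = (\<lambda>x. SOME \<mu>'. crP x \<mu>')"
  have cr: "crP x (cr x)" for x
  proof -
    have "\<exists>\<mu>'. crP x \<mu>'"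
    proof -
      define s where "s = (SUP \<mu>\<in>C. cyl \<mu> x)"
      have bdd: "bdd_above ((\<lambda>\<mu>. cyl \<mu> x) ` C)" using cyl_le1 spC by (auto intro!: bdd_aboveI[of _ 1])
      have le: "cyl \<mu> x \<le> s" if "\<mu> \<in> C" for \<mu> unfolding s_def using that bdd by (rule cSUP_upper)
      show ?thesis
      proof (cases "s > 0")
        case True
        hence "s/2 < s" by simp
        then obtain \<mu>' where \<mu>': "\<mu>' \<in> C" "s/2 < cyl \<mu>' x"
          unfolding s_def using less_cSUP_iff[OF assms(1) bdd] by blast
        show ?thesis unfolding crP_def using \<mu>' le by (intro exI[of _ \<mu>']) force
      next
        case False
        show ?thesis unfolding crP_def using False le \<mu>0 cyl_nonneg[of \<mu>0 x]
          by (intro exI[of _ \<mu>0]) force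
      qed
    qed
    thus ?thesis unfolding cr_def by (rule someI_ex)
  qed
  define \<mu>s where "\<mu>s = (\<lambda>k. case prod_decode k of (a, i) \<Rightarrow>
      (case prod_decode a of (n, j) \<Rightarrow> if j = 0 then cr (en n i) else g n j i))"
  define w where "w = (\<lambda>k::nat. (6 / pi^2) * (1 / (real k + 1)^2))"
  have \<mu>sC: "\<forall>k. \<mu>s k \<in> C"
  proof
    fix k
    obtain a i where ai: "prod_decode k = (a, i)" by (cases "prod_decode k")
    obtain n j where nj: "prod_decode a = (n, j)" by (cases "prod_decode a")
    show "\<mu>s k \<in> C" using cr[of "en n i"] g[of n j] by (simp add: \<mu>s_def ai nj crP_def gP_def)
  qed
  have wpos: "\<forall>k. w k > 0" by (simp add: w_def pi_gt_zero add_pos_nonneg)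
  have wsum: "w sums 1"
  proof -
    have "(\<lambda>k. (6 / pi^2) * (1 / (real k + 1)^2)) sums ((6 / pi^2) * (pi^2 / 6))"
    proof (rule sums_mult)
      have "(\<lambda>k. 1 / real ((k + 1)^2)) = (\<lambda>k. 1 / (real k + 1)^2)" by (simp add: add.commute)
      thus "(\<lambda>k. 1 / (real k + 1)^2) sums (pi^2 / 6)" using inverse_squares_sums by metis
    qed
    thus ?thesis using pi_gt_zero by (simp add: w_def)
  qed
  have \<mu>sp: "\<forall>k. seq_prob (\<mu>s k)" using \<mu>sC spC by blast
  have wnn: "\<forall>k. w k \<ge> 0" using wpos less_imp_le by blast
  obtain \<nu> where \<nu>: "seq_prob \<nu>"
    and \<nu>eq: "\<forall>A\<in>sets \<nu>. emeasure \<nu> A = (\<Sum>k. ennreal (w k) * emeasure (\<mu>s k) A)"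
    using mixture_exists[OF \<mu>sp wnn wsum] by blast
  have low: "\<And>k x. w k * cyl (\<mu>s k) x \<le> cyl \<nu> x" by (rule mixture_lower[OF \<mu>sp wnn \<nu> \<nu>eq])
  have wlow: "w k \<ge> (6 / pi^2) / M^2" if "real k + 1 \<le> M" for k M
  proof -
    have "(real k + 1)^2 \<le> M^2" using that by (intro power_mono) auto
    moreover have "M > 0" using that by (smt (verit) of_nat_0_le_iff)
    ultimately have "1 / M^2 \<le> 1 / (real k + 1)^2" by (intro divide_left_mono) auto
    thus ?thesis unfolding w_def using pi_gt_zero by (simp add: divide_inverse mult_left_mono)
  qed
  define \<alpha> where "\<alpha> = (\<lambda>n::nat. (3 / pi^2) / (real ((n + 1)^2 + N^n))^4)"
  have crude: "\<alpha> n * cyl \<mu> x \<le> cyl \<nu> x" if \<mu>C: "\<mu> \<in> C" and xS: "x \<in> S n" for \<mu> n x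
  proof -
    obtain i where i: "i < N^n" "en n i = x" using en[of n] xS
      by (metis atLeastLessThan_iff bij_betw_iff_bijections)
    define k where "k = prod_encode (prod_encode (n, 0), i)"
    have mk: "\<mu>s k = cr x" by (simp add: \<mu>s_def k_def i)
    define Mb where "Mb = (n + 1)^2 + N^n"
    have "prod_encode (n, 0) + 1 \<le> (n + 0 + 1)^2" by (rule pe_bound)
    hence "prod_encode (n, 0) + i + 1 \<le> Mb" using i(1) by (simp add: Mb_def)
    hence "(prod_encode (n, 0) + i + 1)^2 \<le> Mb^2" by (rule power_mono) simp
    moreover have "k + 1 \<le> (prod_encode (n, 0) + i + 1)^2" unfolding k_def by (rule pe_bound)
    ultimately have "k + 1 \<le> Mb^2" by linarith
    hence "real k + 1 \<le> real Mb ^ 2" by (metis of_nat_Suc of_nat_le_iff of_nat_power Suc_eq_plus1 add.commute)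
    hence wk: "w k \<ge> (6 / pi^2) / (real Mb ^ 2)^2" by (rule wlow)
    have c2: "cyl \<mu> x \<le> 2 * cyl (cr x) x" using cr[of x] \<mu>C by (simp add: crP_def)
    have "\<alpha> n * cyl \<mu> x = ((6 / pi^2) / (real Mb ^ 2)^2) * (cyl \<mu> x / 2)"
      by (simp add: \<alpha>_def Mb_def power_mult[symmetric] field_simps)
    also have "\<dots> \<le> w k * cyl (cr x) x"
      using wk c2 cyl_nonneg[of \<mu> x] pi_gt_zero wnn by (intro mult_mono) auto
    also have "\<dots> \<le> cyl \<nu> x" using low[of k x] by (simp add: mk)
    finally show ?thesis .
  qed
  define \<beta> where "\<beta> = (\<lambda>n j. (6 / pi^2) / (real ((n + j + 1)^2 + K n j))^4 / real n)"
  have refined: "\<beta> n j * q x \<le> cyl \<nu> x" if j1: "j \<ge> 1" and n1: "n \<ge> 1" and xU: "x \<in> U n (g n j) (K n j)" for n j x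
  proof -
    obtain i where i: "i < K n j" "x \<in> T n (g n j i)" using xU by (auto simp: U_def)
    define k where "k = prod_encode (prod_encode (n, j), i)"
    have mk: "\<mu>s k = g n j i" using j1 by (simp add: \<mu>s_def k_def)
    define Mb where "Mb = (n + j + 1)^2 + K n j"
    have "prod_encode (n, j) + 1 \<le> (n + j + 1)^2" by (rule pe_bound)
    hence "prod_encode (n, j) + i + 1 \<le> Mb" using i(1) by (simp add: Mb_def)
    hence "(prod_encode (n, j) + i + 1)^2 \<le> Mb^2" by (rule power_mono) simp
    moreover have "k + 1 \<le> (prod_encode (n, j) + i + 1)^2" unfolding k_def by (rule pe_bound)
    ultimately have "k + 1 \<le> Mb^2" by linarith
    hence "real k + 1 \<le> real Mb ^ 2" by (metis of_nat_Suc of_nat_le_iff of_nat_power Suc_eq_plus1 add.commute)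
    hence wk: "w k \<ge> (6 / pi^2) / (real Mb ^ 2)^2" by (rule wlow)
    have qx: "q x \<le> real n * cyl (g n j i) x" using i(2) by (simp add: T_def)
    have n0: "real n > 0" using n1 by simp
    have "\<beta> n j * q x = ((6 / pi^2) / (real Mb ^ 2)^2) * (q x / real n)"
      by (simp add: \<beta>_def Mb_def power_mult[symmetric] field_simps)
    also have "\<dots> \<le> w k * cyl (g n j i) x"
    proof (intro mult_mono wk)
      show "q x / real n \<le> cyl (g n j i) x" using qx n0 by (simp add: pos_divide_le_eq mult.commute)
    qed (use q0 n0 pi_gt_zero wnn in auto)
    also have "\<dots> \<le> cyl \<nu> x" using low[of k x] by (simp add: mk)
    finally show ?thesis .
  qed
  have pa: "\<alpha> n > 0" "\<alpha> n \<le> 1" for n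
  proof -
    have "1 \<le> (n + 1)^2 + N^n" using one_le_power[of "n+1" 2] by linarith
    hence "(1::real) \<le> real ((n + 1)^2 + N^n)" by (metis of_nat_1 of_nat_le_iff)
    hence M1: "(1::real) \<le> (real ((n + 1)^2 + N^n))^4" by (rule one_le_power)
    have p3: "3 / pi^2 \<le> 1" using pi_sq_ge9 by simp
    have "\<alpha> n \<le> 3 / pi^2" unfolding \<alpha>_def using M1 pi_gt_zero by (intro div_le_self_aux) auto
    then show "\<alpha> n \<le> 1" using p3 by linarith
    show "\<alpha> n > 0" unfolding \<alpha>_def using M1 pi_gt_zero by (intro divide_pos_pos) auto
  qed
  have pb: "\<beta> n j > 0" "\<beta> n j \<le> 1" if n1: "n \<ge> 1" for n j
  proof -
    have "1 \<le> (n + j + 1)^2 + K n j" using one_le_power[of "n+j+1" 2] by linarith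
    hence "(1::real) \<le> real ((n + j + 1)^2 + K n j)" by (metis of_nat_1 of_nat_le_iff)
    hence M1: "(1::real) \<le> (real ((n + j + 1)^2 + K n j))^4" by (rule one_le_power)
    have p6: "6 / pi^2 \<le> 1" using pi_sq_ge9 by simp
    have "real n \<ge> 1" using n1 by simp
    have "(6 / pi^2) / (real ((n + j + 1)^2 + K n j))^4 \<le> 6 / pi^2"
      using M1 pi_gt_zero by (intro div_le_self_aux) auto
    moreover have "(6 / pi^2) / (real ((n + j + 1)^2 + K n j))^4 / real n \<le> (6 / pi^2) / (real ((n + j + 1)^2 + K n j))^4"
      using M1 pi_gt_zero \<open>real n \<ge> 1\<close> by (intro div_le_self_aux) auto
    ultimately have "(6 / pi^2) / (real ((n + j + 1)^2 + K n j))^4 / real n \<le> 1" using p6 by linarith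
    moreover have "(6 / pi^2) / (real ((n + j + 1)^2 + K n j))^4 / real n > 0"
      using M1 pi_gt_zero \<open>real n \<ge> 1\<close> by (intro divide_pos_pos) auto
    ultimately show "\<beta> n j > 0" "\<beta> n j \<le> 1" unfolding \<beta>_def by auto
  qed
  have predicts_all: "\<forall>\<mu>\<in>C. predicts \<nu> \<mu>"
  proof
    fix \<mu> assume \<mu>C: "\<mu> \<in> C"
    define p where "p = cyl \<mu>"
    define v where "v = cyl \<nu>"
    have p0: "\<And>x. p x \<ge> 0" and v0: "\<And>x. v x \<ge> 0" by (simp_all add: p_def v_def cyl_nonneg)
    have sp: "\<And>n. sum p (S n) = 1" unfolding p_def S_def by (rule cyl_sum[OF spC[OF \<mu>C]])
    have sv: "\<And>n. sum v (S n) = 1" unfolding v_def S_def by (rule cyl_sum[OF \<nu>])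
    define Dr where "Dr = (\<lambda>n. \<Sum>x\<in>S n. kr (p x) (q x))"
    define Dv where "Dv = (\<lambda>n. \<Sum>x\<in>S n. kr (p x) (v x))"
    have pred: "(\<lambda>n. kl_div n \<mu> \<rho> / ereal (real n)) \<longlonglongrightarrow> 0" using pr \<mu>C by (simp add: predicts_def)
    have klr: "kl_div n \<mu> \<rho> = (\<Sum>x\<in>S n. kl_term (p x) (q x))" for n by (simp add: kl_div_def S_def p_def q_def)
    have klv: "kl_div n \<mu> \<nu> = (\<Sum>x\<in>S n. kl_term (p x) (v x))" for n by (simp add: kl_div_def S_def p_def v_def)
    have ev1: "eventually (\<lambda>n. n \<ge> 1 \<and> (\<forall>x\<in>S n. p x > 0 \<longrightarrow> q x > 0)) sequentially"
    proof -
      have "eventually (\<lambda>n. kl_div n \<mu> \<rho> / ereal (real n) < 1) sequentially"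
        using pred by (rule order_tendstoD) simp
      moreover have "eventually (\<lambda>n. n \<ge> 1) sequentially" by (rule eventually_ge_at_top)
      ultimately show ?thesis
      proof eventually_elim
        case (elim n)
        show ?case
        proof (intro conjI ballI impI)
          show "n \<ge> 1" using elim(2) .
          fix x assume x: "x \<in> S n" "p x > 0"
          show "q x > 0"
          proof (rule ccontr)
            assume "\<not> q x > 0"
            hence "q x = 0" using q0[of x] by linarith
            hence "kl_div n \<mu> \<rho> = \<infinity>" unfolding klr by (rule kl_inf[where p=p and r=q, OF finS[of n] x])
            hence "kl_div n \<mu> \<rho> / ereal (real n) = \<infinity>" by simp
            thus False using elim(1) by simp
          qed
        qed
      qed
    qed
    have Dr_lim: "(\<lambda>n. Dr n / real n) \<longlonglongrightarrow> 0"
    proof -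
      have evq: "eventually (\<lambda>n. kl_div n \<mu> \<rho> / ereal (real n) = ereal (Dr n / real n)) sequentially"
        using ev1
      proof eventually_elim
        case (elim n)
        have "kl_div n \<mu> \<rho> = ereal (Dr n)" unfolding klr Dr_def
          using elim finS[of n] p0 q0 by (intro kl_ereal) auto
        thus ?case using elim by simp
      qed
      have "((\<lambda>n. ereal (Dr n / real n)) \<longlongrightarrow> 0) sequentially"
        using tendsto_cong[OF evq] pred by simp
      hence "((\<lambda>n. ereal (Dr n / real n)) \<longlongrightarrow> ereal 0) sequentially" by (simp add: zero_ereal_def)
      thus ?thesis by (simp only: lim_ereal)
    qed
    have pv: "\<forall>x\<in>S n. p x \<ge> 0 \<and> v x \<ge> 0 \<and> (p x > 0 \<longrightarrow> v x > 0)" for n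
    proof (intro ballI conjI impI p0 v0)
      fix x assume x: "x \<in> S n" "p x > 0"
      have "\<alpha> n * p x \<le> v x" unfolding p_def v_def using crude[OF \<mu>C x(1)] .
      moreover have "\<alpha> n * p x > 0" using pa(1)[of n] x(2) by simp
      ultimately show "v x > 0" by linarith
    qed
    have klv_eq: "kl_div n \<mu> \<nu> = ereal (Dv n)" for n
      unfolding klv Dv_def by (rule kl_ereal[OF finS pv])
    have Dv0: "Dv n \<ge> 0" for n
      using kr_sum_ge[OF finS pv, of n] sp[of n] sv[of n] by (simp add: Dv_def)
    define A where "A = 6 + 4 * ln (8 * real N)"
    have A0: "A \<ge> 0" using N1 by (simp add: A_def)
    define Cb where "Cb = (\<lambda>j::nat. 3 + 4 * ln 4 + 9 * ln 2 + 8 * ln (real j + 1))"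
    define c where "c = (\<lambda>j::nat. 1 + Cb j + A * (1 + 4 * real j))"
    have bnd: "eventually (\<lambda>n. Dv n \<le> 4 * (real n / real j) + (1 + 2 * real j * A) * Dr n + c j + 9 * ln (real n)) sequentially"
      if j1: "j \<ge> 1" for j
      using ev1
    proof eventually_elim
      case (elim n)
      have n1: "n \<ge> 1" and pq: "\<forall>x\<in>S n. p x > 0 \<longrightarrow> q x > 0" using elim by auto
      define E where "E = exp (real n / (2 * real j))"
      define \<delta> where "\<delta> = 1 / real (K n j)"
      define UU where "UU = U n (g n j) (K n j)"
      have Kge: "real (K n j) \<ge> exp (real n / real j)" unfolding K_def by (rule K_bounds(1)) simp
      hence Kp: "real (K n j) > 0" by (smt (verit) exp_gt_zero)
      have US: "UU \<subseteq> S n" by (auto simp: UU_def U_def T_def)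
      have cov: "sum q ({x\<in>S n. q x \<le> real n * p x} - UU) \<le> \<delta>"
      proof -
        have "real (K n j) * sum q (T n \<mu> - UU) \<le> sum q UU"
          using g[of n j] \<mu>C by (simp add: gP_def UU_def)
        also have "\<dots> \<le> sum q (S n)" using US finS[of n] q0 by (intro sum_mono2) auto
        finally have "real (K n j) * sum q (T n \<mu> - UU) \<le> 1" using sq[of n] by simp
        hence "sum q (T n \<mu> - UU) \<le> \<delta>" using Kp by (simp add: \<delta>_def field_simps)
        thus ?thesis by (simp add: T_def p_def)
      qed
      have E1: "E > 1" using n1 j1 by (simp add: E_def)
      have kb: "Dv n \<le> Dr n + 1 + ln (1 / \<beta> n j) + (1 / real n + E * \<delta> + (Dr n + 1) / ln E) * ln (1 / \<alpha> n)"
        unfolding Dv_def Dr_def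
      proof (rule key_bound[OF finS])
        show "\<forall>x\<in>S n. 0 \<le> p x" "\<forall>x\<in>S n. 0 \<le> q x" "\<forall>x\<in>S n. 0 \<le> v x" using p0 q0 v0 by auto
        show "sum p (S n) = 1" "sum q (S n) = 1" by (rule sp, rule sq)
        show "\<forall>x\<in>S n. 0 < p x \<longrightarrow> 0 < q x" by (rule pq)
        show "0 < \<alpha> n" "\<alpha> n \<le> 1" by (rule pa(1), rule pa(2))
        show "\<forall>x\<in>S n. \<alpha> n * p x \<le> v x" using crude[OF \<mu>C] by (simp add: p_def v_def)
        show "0 < \<beta> n j" "\<beta> n j \<le> 1" using pb[OF n1] by auto
        show "UU \<subseteq> S n" by (rule US)
        show "\<forall>x\<in>UU. \<beta> n j * q x \<le> v x" using refined[OF j1 n1] by (simp add: UU_def v_def)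
        show "0 < real n" using n1 by simp
        show "sum q ({x \<in> S n. q x \<le> real n * p x} - UU) \<le> \<delta>" by (rule cov)
        show "1 < E" by (rule E1)
      qed
      have lb: "ln (1 / \<beta> n j) \<le> Cb j + 9 * ln (real n) + 4 * (real n / real j)"
        using ln_beta_bound[OF n1 j1, of "K n j"] by (simp add: \<beta>_def Cb_def K_def)
      have la: "ln (1 / \<alpha> n) \<le> real n * A"
        using ln_alpha_bound[OF n1 N1] by (simp add: \<alpha>_def A_def)
      have la0: "ln (1 / \<alpha> n) \<ge> 0" using pa[of n] by simp
      have Ed: "E * \<delta> \<le> 2 * real j / real n"
        using Edelta_bound[OF n1 j1, of "K n j"] by (simp add: E_def \<delta>_def K_def)
      have Ed0: "E * \<delta> \<ge> 0" using Kp by (simp add: E_def \<delta>_def)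
      have lE: "ln E = real n / (2 * real j)" by (simp add: E_def)
      have Dr1: "Dr n \<ge> -1"
      proof -
        have "Dr n \<ge> sum p (S n) - sum q (S n)" unfolding Dr_def
          using pq p0 q0 by (intro kr_sum_ge[OF finS]) auto
        thus ?thesis using sp[of n] sq[of n] by simp
      qed
      have "Dv n \<le> 4 * (real n / real j) + (1 + 2 * real j * A) * Dr n + (1 + Cb j + A * (1 + 4 * real j)) + 9 * ln (real n)"
        by (rule combine[OF kb lb la la0 A0 Ed Ed0 lE Dr1]) (use n1 j1 in auto)
      thus ?case by (simp add: c_def)
    qed
    have Dv_lim: "(\<lambda>n. Dv n / real n) \<longlonglongrightarrow> 0"
      by (rule final_limit[OF Dr_lim _ bnd]) (simp add: Dv0)
    have evv: "eventually (\<lambda>n. kl_div n \<mu> \<nu> / ereal (real n) = ereal (Dv n / real n)) sequentially"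
      using eventually_ge_at_top[of 1]
    proof eventually_elim
      case (elim n) thus ?case by (simp add: klv_eq)
    qed
    have lim: "((\<lambda>n. ereal (Dv n / real n)) \<longlongrightarrow> 0) sequentially"
      using Dv_lim by (simp add: zero_ereal_def)
    show "predicts \<nu> \<mu>" unfolding predicts_def by (subst tendsto_cong[OF evv]) (rule lim)
  qed
  show ?thesis
    by (intro exI[of _ \<mu>s] exI[of _ w] exI[of _ \<nu>] conjI \<mu>sC wpos wsum \<nu> \<nu>eq predicts_all)
qed


end
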